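(* Let $X$ be a real Banach space such that $X^*$ has the Radon–Nikodym property (in the sense below), and let $g:X^*\to\mathbb{R}\cup\{+\infty\}$ be a proper convex weak$^*$-lower semicontinuous function which is $w^*$-epi-pointed, i.e. $\operatorname{int}(\operatorname{dom}(g^*|_X))\neq\emptyset$. Then $w^*\text{-}\mathrm{Exp}\,g$ is norm-dense in $\operatorname{int}(\operatorname{dom}(g^*|_X))$.
   Context: $\operatorname{dom} g=\{g<+\infty\}$; proper means $g>-\infty$ everywhere and $\operatorname{dom} g\ne\emptyset$. $g^*|_X:X\to(-\infty,+\infty]$ is $g^*(x)=\sup_{x^*\in X^*}(\langle x^*,x\rangle-g(x^* ))$; interiors in $X$ are for the norm topology. For a nonempty closed convex $C\subset X^*\times\mathbb{R}$ (dual of $X\times\mathbb{R}$), with $\sigma_C(u)=\sup_{c\in C}\langle c,u\rangle$ for $u\in X\times\mathbb{R}$: a point $c_0\in C$ is $w^*$-strongly exposed by $u\in X\times\mathbb{R}$ if for every sequence $(c_n)\subset C$, $\langle c_n,u\rangle\to\sigma_C(u)$ implies $c_n\to c_0$ in norm. A point $x^*\in\operatorname{dom} g$ is a $w^*$-strongly exposed point of $g$ ($x^*\in w^*\text{-}\mathrm{exp}\,g$) if $(x^*,g(x^* ))$ is a $w^*$-strongly exposed point of $\operatorname{epi} g=\{(y^*,r):r\ge g(y^* )\}$. For such $x^*$, $w^*\text{-}\mathrm{Exp}(g,x^* )$ is the set of $x\in X$ such that $(x,-1)$ $w^*$-strongly exposes $(x^*,g(x^* ))$ in $\operatorname{epi}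 g$, and $w^*\text{-}\mathrm{Exp}\,g=\bigcup_{x^*\in w^*\text{-}\mathrm{exp}\,g}w^*\text{-}\mathrm{Exp}(g,x^* )$. $X^*$ has the Radon–Nikodym property if every nonempty weak$^*$-compact convex $K\subset X^*$ equals the weak$^*$-closed convex hull of its $w^*$-strongly exposed points. *)

theory Defs
  imports "HOL-Analysis.Analysis"
begin

(* The dual dual of a real Banach space X is modelled as the bounded linear functionals
  'a =>L real (with operator norm). *)

definition weak_star :: "('a::real_normed_vector \<Rightarrow>\<^sub>L real) topology" where
  "weak_star = pullback_topology UNIV blinfun_apply (product_topology (\<lambda>_. euclideanreal) UNIV)"

definition wstar_closed_convex_hull ::
  "('a::real_normed_vector \<Rightarrow>\<^sub>L real) set \<Rightarrow> ('a \<Rightarrow>\<^sub>L real) set" where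
  "wstar_closed_convex_hull E = \<Inter>{C. convex C \<and> closedin weak_star C \<and> E \<subseteq> C}"

definition strongly_exposed_by :: "'b::metric_space set \<Rightarrow> ('b \<Rightarrow> real) \<Rightarrow> 'b \<Rightarrow> bool" where
  "strongly_exposed_by C phi c0 \<longleftrightarrow> c0 \<in> C \<and>
     (\<forall>s. (\<forall>n. s n \<in> C) \<longrightarrow>
        (\<lambda>n. ereal (phi (s n))) \<longlonglongrightarrow> (SUP c\<in>C. ereal (phi c)) \<longrightarrow> s \<longlonglongrightarrow> c0)"

definition dual_RNP :: "'a::real_normed_vector itself \<Rightarrow> bool" where
  "dual_RNP _ \<longleftrightarrow> (\<forall>K :: ('a \<Rightarrow>\<^sub>L real) set.
      K \<noteq> {} \<and> compactin weak_star K \<and> convex K \<longrightarrow>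
      K = wstar_closed_convex_hull {c0. \<exists>x. strongly_exposed_by K (\<lambda>c. blinfun_apply c x) c0})"

definition edom :: "('b \<Rightarrow> ereal) \<Rightarrow> 'b set" where
  "edom g = {y. g y < \<infinity>}"

definition proper_fun :: "('b \<Rightarrow> ereal) \<Rightarrow> bool" where
  "proper_fun g \<longleftrightarrow> (\<forall>y. g y > -\<infinity>) \<and> edom g \<noteq> {}"

definition epi :: "('b \<Rightarrow> ereal) \<Rightarrow> ('b \<times> real) set" where
  "epi g = {(y, r). g y \<le> ereal r}"

definition convex_efun :: "('b::real_vector \<Rightarrow> ereal) \<Rightarrow> bool" where
  "convex_efun g \<longleftrightarrow> convex (epi g)"

definition wstar_lsc :: "(('a::real_normed_vector \<Rightarrow>\<^sub>L real) \<Rightarrow> ereal) \<Rightarrow> bool" where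
  "wstar_lsc g \<longleftrightarrow> (\<forall>c::ereal. closedin weak_star {y. g y \<le> c})"

definition conj_X :: "(('a::real_normed_vector \<Rightarrow>\<^sub>L real) \<Rightarrow> ereal) \<Rightarrow> 'a \<Rightarrow> ereal" where
  "conj_X g x = (SUP y. ereal (blinfun_apply y x) - g y)"

(* w*-Exp g: points x such that (x,-1) w*-strongly exposes (xs, g xs) in epi g,
  for some xs in dom g. *)
definition wstar_Exp :: "(('a::real_normed_vector \<Rightarrow>\<^sub>L real) \<Rightarrow> ereal) \<Rightarrow> 'a set" where
  "wstar_Exp g = {x. \<exists>xs. xs \<in> edom g \<and>
      strongly_exposed_by (epi g) (\<lambda>(c, r). blinfun_apply c x - r) (xs, real_of_ereal (g xs))}"

end

theory Submission
  imports Defs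
begin


lemma ws_topspace [simp]: "topspace weak_star = UNIV"
  unfolding weak_star_def topspace_pullback_topology by simp

lemma ws_cont_eval: "continuous_map weak_star euclideanreal (\<lambda>c. blinfun_apply c x)"
proof -
  have "continuous_map weak_star euclideanreal ((\<lambda>f. f x) \<circ> blinfun_apply)"
    unfolding weak_star_def by (rule continuous_map_pullback) (use continuous_map_product_projection[of x UNIV "\<lambda>_. euclideanreal"] in simp)
  then show ?thesis by (simp add: o_def)
qed

lemma ws_closed_le: "closedin weak_star {c. blinfun_apply c x \<le> a}"
  using closedin_continuous_map_preimage[OF ws_cont_eval[of x], of "{..a}"] by simp

lemma ws_closed_ge: "closedin weak_star {c. blinfun_apply c x \<ge> a}"
  using closedin_continuous_map_preimage[OF ws_cont_eval[of x], of "{a..}"] by simp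

lemma ws_open_less: "openin weak_star {c. blinfun_apply c x < a}"
  using openin_continuous_map_preimage[OF ws_cont_eval[of x], of "{..<a}"] by simp

lemma ws_open_gt: "openin weak_star {c. blinfun_apply c x > a}"
  using openin_continuous_map_preimage[OF ws_cont_eval[of x], of "{a<..}"] by simp

lemma norm_le_iff_pointwise:
  fixes c :: "'a::real_normed_vector \<Rightarrow>\<^sub>L real"
  assumes "0 \<le> R"
  shows "norm c \<le> R \<longleftrightarrow> (\<forall>x. blinfun_apply c x \<le> R * norm x)"
proof
  assume "norm c \<le> R"
  then show "\<forall>x. blinfun_apply c x \<le> R * norm x"
    by (metis abs_le_D1 norm_blinfun mult_right_mono norm_ge_zero order_trans real_norm_def)
next
  assume h: "\<forall>x. blinfun_apply c x \<le> R * norm x"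
  show "norm c \<le> R"
  proof (rule norm_blinfun_bound[OF assms])
    fix x
    have "blinfun_apply c x \<le> R * norm x" using h by blast
    moreover have "- blinfun_apply c x \<le> R * norm x" using h[rule_format, of "-x"]
      by (simp add: blinfun.minus_right)
    ultimately show "norm (blinfun_apply c x) \<le> R * norm x" by simp
  qed
qed

lemma ws_closed_ball: "closedin weak_star {c::'a::real_normed_vector \<Rightarrow>\<^sub>L real. norm c \<le> R}"
proof (cases "R \<ge> 0")
  case True
  have "{c::'a \<Rightarrow>\<^sub>L real. norm c \<le> R} = (\<Inter>x. {c. blinfun_apply c x \<le> R * norm x})"
    using norm_le_iff_pointwise[OF True] by auto
  moreover have "closedin weak_star (\<Inter>x. {c::'a \<Rightarrow>\<^sub>L real. blinfun_apply c x \<le> R * norm x})"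
    by (intro closedin_INT ws_closed_le) auto
  ultimately show ?thesis by simp
next
  case False
  then have "{c::'a \<Rightarrow>\<^sub>L real. norm c \<le> R} = {}" by (auto intro: order_trans[OF norm_ge_zero])
  then show ?thesis by simp
qed



lemma compactin_pullback_UNIV:
  assumes "compactin T (f ` K)"
  shows "compactin (pullback_topology UNIV f T) K"
  unfolding compactin_def
proof (intro conjI allI impI)
  show "K \<subseteq> topspace (pullback_topology UNIV f T)"
    using compactin_subset_topspace[OF assms] by (auto simp: topspace_pullback_topology)
next
  fix \<U> assume H: "(\<forall>U\<in>\<U>. openin (pullback_topology UNIV f T) U) \<and> K \<subseteq> \<Union>\<U>"
  then have "\<forall>U\<in>\<U>. \<exists>V. openin T V \<and> U = f -` V \<inter> UNIV"
    by (simp add: openin_pullback_topology)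
  then obtain V where V: "\<And>U. U \<in> \<U> \<Longrightarrow> openin T (V U) \<and> U = f -` V U"
    by (metis Int_UNIV_right)
  have "f ` K \<subseteq> \<Union>(V ` \<U>)" using H V by fastforce
  moreover have "\<forall>W\<in>V ` \<U>. openin T W" using V by blast
  ultimately obtain \<F>' where F': "finite \<F>'" "\<F>' \<subseteq> V ` \<U>" "f ` K \<subseteq> \<Union>\<F>'"
    using assms unfolding compactin_def by metis
  then obtain \<F> where F: "\<F> \<subseteq> \<U>" "finite \<F>" "\<F>' = V ` \<F>"
    by (meson finite_subset_image)
  have "K \<subseteq> \<Union>\<F>"
  proof
    fix k assume "k \<in> K"
    then obtain W where "W \<in> \<F>'" "f k \<in> W" using F' by blast
    then obtain U where "U \<in> \<F>" "W = V U" using F by blast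
    then show "k \<in> \<Union>\<F>" using V \<open>f k \<in> W\<close> F(1) by blast
  qed
  then show "\<exists>\<F>. finite \<F> \<and> \<F> \<subseteq> \<U> \<and> K \<subseteq> \<Union>\<F>" using F by blast
qed

abbreviation "PT \<equiv> product_topology (\<lambda>_. euclideanreal) UNIV"

lemma cont_proj: "continuous_map (PT :: ('a \<Rightarrow> real) topology) euclideanreal (\<lambda>f. f x)"
  using continuous_map_product_projection[of x UNIV "\<lambda>_. euclideanreal"] by simp

lemma closed_add_cond:
  "closedin (PT :: ('a::real_normed_vector \<Rightarrow> real) topology) {f. f (x + y) = f x + f y}"
proof -
  have "continuous_map (PT :: ('a \<Rightarrow> real) topology) euclideanreal (\<lambda>f. f (x + y) - f x - f y)"
    by (intro continuous_map_diff cont_proj)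
  from closedin_continuous_map_preimage[OF this, of "{0}"] show ?thesis by (simp add: algebra_simps)
qed

lemma closed_scale_cond:
  "closedin (PT :: ('a::real_normed_vector \<Rightarrow> real) topology) {f. f (a *\<^sub>R x) = a * f x}"
proof -
  have "continuous_map (PT :: ('a \<Rightarrow> real) topology) euclideanreal (\<lambda>f. f (a *\<^sub>R x) - a * f x)"
    by (intro continuous_map_diff continuous_map_real_mult_left cont_proj)
  from closedin_continuous_map_preimage[OF this, of "{0}"] show ?thesis by simp
qed

lemma alaoglu:
  "compactin weak_star {c::'a::real_normed_vector \<Rightarrow>\<^sub>L real. norm c \<le> R}"
proof (cases "R \<ge> 0")
  case False
  then have "{c::'a \<Rightarrow>\<^sub>L real. norm c \<le> R} = {}" by (auto intro: order_trans[OF norm_ge_zero])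
  then show ?thesis by simp
next
  case True
  define P where "P = (PiE UNIV (\<lambda>x::'a. {-R * norm x .. R * norm x}))"
  define L where "L = (\<Inter>x. \<Inter>y. {f::'a\<Rightarrow>real. f (x + y) = f x + f y}) \<inter> (\<Inter>a. \<Inter>x. {f::'a\<Rightarrow>real. f (a *\<^sub>R x) = a * f x})"
  have cP: "compactin PT P"
    unfolding P_def by (subst compactin_PiE) (auto simp: compactin_euclidean_iff)
  have cL: "closedin PT L"
    unfolding L_def
    by (intro closedin_Int closedin_INT closed_add_cond closed_scale_cond) auto
  have eq: "blinfun_apply ` {c::'a \<Rightarrow>\<^sub>L real. norm c \<le> R} = P \<inter> L"
  proof (intro equalityI subsetI)
    fix f assume "f \<in> blinfun_apply ` {c::'a \<Rightarrow>\<^sub>L real. norm c \<le> R}"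
    then obtain c where c: "norm c \<le> R" "f = blinfun_apply c" by blast
    have ab: "\<bar>f x\<bar> \<le> R * norm x" for x
      using c norm_blinfun[of c x] by (metis mult_right_mono norm_ge_zero order_trans real_norm_def)
    have "-(R*norm x) \<le> f x \<and> f x \<le> R * norm x" for x using ab[of x] by linarith
    then have "f \<in> P" unfolding P_def by (auto simp: PiE_iff)
    moreover have "f \<in> L" unfolding L_def c
      by (auto simp: blinfun.add_right blinfun.scaleR_right)
    ultimately show "f \<in> P \<inter> L" by blast
  next
    fix f assume "f \<in> P \<inter> L"
    then have fP: "f \<in> P" and fL: "f \<in> L" by auto
    have "f x \<in> {-R * norm x .. R * norm x}" for x using fP unfolding P_def by (auto simp: PiE_iff)
    then have b: "\<And>x. \<bar>f x\<bar> \<le> R * norm x" by (simp add: abs_le_iff) (meson minus_le_iff)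
    have ad: "\<And>x y. f (x + y) = f x + f y"
      and sc: "\<And>a x. f (a *\<^sub>R x) = a * f x"
      using fL unfolding L_def by auto
    have bl: "bounded_linear f"
      by (rule bounded_linear_intro[where K=R]) (use ad sc b in \<open>auto simp: mult.commute\<close>)
    have "norm (Blinfun f) \<le> R"
      by (rule norm_blinfun_bound[OF True]) (use b bl in \<open>simp add: bounded_linear_Blinfun_apply\<close>)
    moreover have "f = blinfun_apply (Blinfun f)" using bl by (simp add: bounded_linear_Blinfun_apply)
    ultimately show "f \<in> blinfun_apply ` {c::'a \<Rightarrow>\<^sub>L real. norm c \<le> R}" by blast
  qed
  have "compactin PT (blinfun_apply ` {c::'a \<Rightarrow>\<^sub>L real. norm c \<le> R})"
    unfolding eq by (rule compact_Int_closedin[OF cP cL])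
  then show ?thesis unfolding weak_star_def by (rule compactin_pullback_UNIV)
qed



lemma nest_compactin:
  fixes T :: "nat \<Rightarrow> 'a set"
  assumes K: "compactin X K" and cl: "\<And>n. closedin X (T n)" and sub: "\<And>n. T n \<subseteq> K"
    and ne: "\<And>n. T n \<noteq> {}" and dec: "\<And>m n. m \<le> n \<Longrightarrow> T n \<subseteq> T m"
  shows "(\<Inter>n. T n) \<noteq> {}"
proof -
  have "K \<inter> \<Inter>(range T) \<noteq> {}"
  proof (rule compactin_fip[THEN iffD1, OF K, THEN conjunct2, rule_format], intro conjI)
    show "\<forall>C\<in>range T. closedin X C" using cl by blast
    show "\<forall>\<F>. finite \<F> \<and> \<F> \<subseteq> range T \<longrightarrow> K \<inter> \<Inter> \<F> \<noteq> {}"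
    proof (intro allI impI)
      fix \<F> assume F: "finite \<F> \<and> \<F> \<subseteq> range T"
      then obtain I :: "nat set" where I: "finite I" "\<F> = T ` I" by (meson finite_subset_image)
      define N where "N = Max (insert 0 I)"
      have "T N \<subseteq> T i" if "i \<in> I" for i using I that by (intro dec) (simp add: N_def)
      then have "T N \<subseteq> \<Inter>\<F>" using I by auto
      moreover have "T N \<subseteq> K" by (rule sub)
      ultimately show "K \<inter> \<Inter> \<F> \<noteq> {}" using ne[of N] by blast
    qed
  qed
  then show ?thesis by auto
qed

locale gfun =
  fixes g :: "('a::banach \<Rightarrow>\<^sub>L real) \<Rightarrow> ereal"
  assumes hprop: "proper_fun g" and lsc: "wstar_lsc g"
begin

lemma g_gt: "g c > -\<infinity>" using hprop unfolding proper_fun_def by blast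

lemma g_fin: "g c \<noteq> \<infinity> \<Longrightarrow> g c = ereal (real_of_ereal (g c))"
  using g_gt[of c] by (cases "g c") auto

lemma val_ge_iff: "ereal (blinfun_apply c x) - g c \<ge> ereal a \<longleftrightarrow> g c \<noteq> \<infinity> \<and> blinfun_apply c x - real_of_ereal (g c) \<ge> a"
  using g_gt[of c] by (cases "g c") auto

lemma val_le_iff: "ereal (blinfun_apply c x) - g c \<le> ereal a \<longleftrightarrow> g c = \<infinity> \<or> blinfun_apply c x - real_of_ereal (g c) \<le> a"
  using g_gt[of c] by (cases "g c") auto

lemma conj_ge: "ereal (blinfun_apply c x) - g c \<le> conj_X g x"
  unfolding conj_X_def by (rule SUP_upper) simp

lemma conj_gt: "conj_X g x > -\<infinity>"
proof -
  obtain p where p: "g p < \<infinity>" using hprop unfolding proper_fun_def edom_def by blast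
  then have "ereal (blinfun_apply p x) - g p > -\<infinity>" using g_gt[of p] by (cases "g p") auto
  then show ?thesis using conj_ge[of p x] by order
qed

lemma conj_SUP_lt: assumes "ereal a < conj_X g x" shows "\<exists>c. ereal a < ereal (blinfun_apply c x) - g c"
  using assms unfolding conj_X_def by (simp add: less_SUP_iff)

lemma closed_val_ge: "closedin weak_star {c. ereal (blinfun_apply c x) - g c \<ge> ereal a}"
proof -
  have "openin weak_star (UNIV - {c. ereal (blinfun_apply c x) - g c \<ge> ereal a})"
  proof (subst openin_subopen, intro ballI)
    fix c0 assume "c0 \<in> UNIV - {c. ereal (blinfun_apply c x) - g c \<ge> ereal a}"
    then have c0: "\<not> (g c0 \<noteq> \<infinity> \<and> blinfun_apply c0 x - real_of_ereal (g c0) \<ge> a)"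
      by (simp add: val_ge_iff)
    define q where "q = blinfun_apply c0 x - a"
    obtain \<eta> where eta: "\<eta> > 0" "g c0 > ereal (q + \<eta>)"
    proof (cases "g c0 = \<infinity>")
      case True then show ?thesis using that[of 1] by simp
    next
      case False
      then obtain G where G: "g c0 = ereal G" using g_gt[of c0] by (cases "g c0") auto
      then have "G > q" using c0 unfolding q_def by auto
      then show ?thesis using G by (intro that[of "(G - q)/2"]) (auto simp: field_simps)
    qed
    define U where "U = (UNIV - {c. g c \<le> ereal (q + \<eta>)}) \<inter> {c. blinfun_apply c x < blinfun_apply c0 x + \<eta>}"
    have "openin weak_star U" unfolding U_def
      using lsc unfolding wstar_lsc_def
      by (intro openin_Int ws_open_less openin_diff) (auto simp flip: ws_topspace)
    moreover have "c0 \<in> U" unfolding U_def using eta by auto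
    moreover have "U \<subseteq> UNIV - {c. ereal (blinfun_apply c x) - g c \<ge> ereal a}"
    proof
      fix c assume "c \<in> U"
      then have "g c > ereal (q + \<eta>)" "blinfun_apply c x < blinfun_apply c0 x + \<eta>"
        unfolding U_def by auto
      then show "c \<in> UNIV - {c. ereal (blinfun_apply c x) - g c \<ge> ereal a}"
      proof (cases "g c")
        case (real G)
        with \<open>g c > ereal (q + \<eta>)\<close> \<open>blinfun_apply c x < blinfun_apply c0 x + \<eta>\<close>
        show ?thesis unfolding q_def by simp
      qed (use g_gt[of c] in auto)
    qed
    ultimately show "\<exists>U. openin weak_star U \<and> c0 \<in> U \<and> U \<subseteq> UNIV - {c. ereal (blinfun_apply c x) - g c \<ge> ereal a}"
      by blast
  qed
  then show ?thesis unfolding closedin_def by simp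
qed

lemma closed_conj_le: "closed {x. conj_X g x \<le> ereal a}"
proof -
  have "{x. conj_X g x \<le> ereal a} = (\<Inter>c. {x. ereal (blinfun_apply c x) - g c \<le> ereal a})"
    unfolding conj_X_def by (auto simp: SUP_le_iff)
  moreover have "closed {x. ereal (blinfun_apply c x) - g c \<le> ereal a}" for c
  proof (cases "g c = \<infinity>")
    case True then show ?thesis by simp
  next
    case False
    then have "{x. ereal (blinfun_apply c x) - g c \<le> ereal a} = {x. blinfun_apply c x \<le> a + real_of_ereal (g c)}"
      by (auto simp: val_le_iff)
    moreover have "closed {x. blinfun_apply c x \<le> a + real_of_ereal (g c)}"
      by (intro closed_Collect_le continuous_intros)
    ultimately show ?thesis by simp
  qed
  ultimately show ?thesis by auto
qed

end


context gfun begin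
definition Mx where "Mx x = {c. ereal (blinfun_apply c x) - g c = conj_X g x}"
definition Fr where "Fr x = real_of_ereal (conj_X g x)"
end

locale region = gfun g for g :: "('a::banach \<Rightarrow>\<^sub>L real) \<Rightarrow> ereal" +
  fixes z :: 'a and s M L :: real
  assumes spos: "s > 0"
    and ub: "\<And>x. x \<in> ball z (2 * s) \<Longrightarrow> conj_X g x \<le> ereal M"
    and lb: "\<And>x. x \<in> ball z (2 * s) \<Longrightarrow> conj_X g x \<ge> ereal (-L)"
begin

lemma conj_fin: "x \<in> ball z (2 * s) \<Longrightarrow> conj_X g x = ereal (Fr x)"
  using ub[of x] lb[of x] unfolding Fr_def by (cases "conj_X g x") auto

lemma coerc:
  assumes x: "x \<in> ball z s" and a: "ereal (blinfun_apply c x) - g c \<ge> ereal a"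
  shows "norm c \<le> (M - a)/s"
proof -
  from a have gc: "g c \<noteq> \<infinity>" and ca: "blinfun_apply c x - real_of_ereal (g c) \<ge> a"
    by (auto simp: val_ge_iff)
  have cu: "blinfun_apply c u \<le> (M - a)/s" if u: "norm u \<le> 1" for u
  proof -
    have "dist z (x + s *\<^sub>R u) \<le> dist z x + dist x (x + s *\<^sub>R u)"
      by (rule dist_triangle)
    also have "dist x (x + s *\<^sub>R u) = norm (s *\<^sub>R u)" by (simp add: dist_norm)
    also have "dist z x + norm (s *\<^sub>R u) < s + s"
    proof -
      have "norm (s *\<^sub>R u) \<le> s" using u spos by (simp add: mult_left_le)
      moreover have "dist z x < s" using x by simp
      ultimately show ?thesis by linarith
    qed
    finally have "x + s *\<^sub>R u \<in> ball z (2 * s)" by simp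
    then have "ereal (blinfun_apply c (x + s *\<^sub>R u)) - g c \<le> ereal M"
      by (rule order_trans[OF conj_ge ub])
    then have "blinfun_apply c (x + s *\<^sub>R u) - real_of_ereal (g c) \<le> M"
      using gc by (simp add: val_le_iff)
    then have "s * blinfun_apply c u \<le> M - a" using ca
      by (simp add: blinfun.add_right blinfun.scaleR_right)
    then show ?thesis using spos by (simp add: pos_le_divide_eq mult.commute)
  qed
  have R0: "0 \<le> (M - a)/s" using cu[of 0] by simp
  show ?thesis
  proof (subst norm_le_iff_pointwise[OF R0], intro allI)
    fix v
    show "blinfun_apply c v \<le> (M - a) / s * norm v"
    proof (cases "v = 0")
      case False
      then have "norm v > 0" by simp
      have "blinfun_apply c (v /\<^sub>R norm v) \<le> (M - a)/s" by (rule cu) (simp add: False)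
      then have "blinfun_apply c v / norm v \<le> (M - a)/s" by (simp add: blinfun.scaleR_right field_simps)
      then show ?thesis using \<open>norm v > 0\<close> by (simp add: divide_le_eq)
    qed simp
  qed
qed

lemma attain: assumes x: "x \<in> ball z s" shows "Mx x \<noteq> {}"
proof -
  have x2: "x \<in> ball z (2 * s)" using x spos by auto
  define F where "F = Fr x"
  have cF: "conj_X g x = ereal F" using conj_fin[OF x2] F_def by simp
  define T where "T k = {c. ereal (blinfun_apply c x) - g c \<ge> ereal (F - 1/(real k + 1))}" for k :: nat
  define K where "K = {c::'a \<Rightarrow>\<^sub>L real. norm c \<le> (M - (F - 1))/s}"
  have "(\<Inter>k. T k) \<noteq> {}"
  proof (rule nest_compactin[of weak_star K])
    show "compactin weak_star K" unfolding K_def by (rule alaoglu)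
    show "closedin weak_star (T k)" for k unfolding T_def by (rule closed_val_ge)
    show "T k \<subseteq> K" for k
    proof
      fix c assume "c \<in> T k"
      then have "norm c \<le> (M - (F - 1/(real k + 1)))/s" unfolding T_def by (intro coerc[OF x]) simp
      also have "\<dots> \<le> (M - (F - 1))/s" using spos by (intro divide_right_mono) (auto simp: field_simps)
      finally show "c \<in> K" unfolding K_def by simp
    qed
    show "T k \<noteq> {}" for k
    proof -
      have "ereal (F - 1/(real k + 1)) < conj_X g x" using cF by simp
      then obtain c where "ereal (F - 1/(real k + 1)) < ereal (blinfun_apply c x) - g c"
        using conj_SUP_lt by blast
      then show ?thesis unfolding T_def by (auto intro: less_imp_le)
    qed
    show "T n \<subseteq> T m" if "m \<le> n" for m n
    proof -
      have "1/(real n + 1) \<le> 1/(real m + 1)" using that by (simp add: frac_le)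
      then show ?thesis unfolding T_def by (auto elim!: order_trans[rotated])
    qed
  qed
  then obtain c where c: "\<And>k. c \<in> T k" by blast
  then have gc: "g c \<noteq> \<infinity>" and ck: "\<And>k. blinfun_apply c x - real_of_ereal (g c) \<ge> F - 1/(real k + 1)"
    unfolding T_def by (auto simp: val_ge_iff)
  have "blinfun_apply c x - real_of_ereal (g c) \<ge> F"
  proof (rule ccontr)
    assume "\<not> ?thesis"
    then obtain k :: nat where "1/(real k + 1) < F - (blinfun_apply c x - real_of_ereal (g c))"
      by (metis diff_gt_0_iff_gt linorder_not_le nat_approx_posE of_nat_Suc add.commute)
    then show False using ck[of k] by linarith
  qed
  then have "ereal (blinfun_apply c x) - g c \<ge> conj_X g x" using cF gc by (simp add: val_ge_iff)
  then have "c \<in> Mx x" unfolding Mx_def using conj_ge[of c x] by (simp add: order_antisym)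
  then show ?thesis by blast
qed

lemma normMx: assumes "x \<in> ball z s" "c \<in> Mx x" shows "norm c \<le> (M + L)/s"
proof -
  have "x \<in> ball z (2 * s)" using assms spos by auto
  then have "ereal (blinfun_apply c x) - g c \<ge> ereal (-L)" using assms lb unfolding Mx_def by simp
  from coerc[OF assms(1) this] show ?thesis by simp
qed

lemma subgrad:
  assumes x: "x \<in> ball z (2 * s)" and y: "y \<in> ball z (2 * s)" and c: "c \<in> Mx x"
  shows "Fr y \<ge> Fr x + blinfun_apply c y - blinfun_apply c x"
proof -
  have e: "ereal (blinfun_apply c x) - g c = ereal (Fr x)" using c conj_fin[OF x] unfolding Mx_def by simp
  then have gc: "g c \<noteq> \<infinity>" by auto
  then obtain G where G: "g c = ereal G" using g_gt[of c] by (cases "g c") auto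
  have "ereal (blinfun_apply c y) - g c \<le> ereal (Fr y)" using conj_ge[of c y] conj_fin[OF y] by simp
  with e G show ?thesis by simp
qed

lemma mono:
  assumes x: "x \<in> ball z (2 * s)" and x': "x' \<in> ball z (2 * s)" and c: "c \<in> Mx x" and c': "c' \<in> Mx x'"
  shows "blinfun_apply c (x' - x) \<le> blinfun_apply c' (x' - x)"
  using subgrad[OF x x' c] subgrad[OF x' x c'] by (simp add: blinfun.diff_right)

end


lemma convex_eval_le: "convex {c::'a::real_normed_vector \<Rightarrow>\<^sub>L real. blinfun_apply c y \<le> a}"
  unfolding convex_def
proof (intro ballI allI impI)
  fix c d :: "'a \<Rightarrow>\<^sub>L real" and u v :: real
  assume "c \<in> {c. blinfun_apply c y \<le> a}" "d \<in> {c. blinfun_apply c y \<le> a}" "0 \<le> u" "0 \<le> v" "u + v = 1"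
  then have "u * blinfun_apply c y + v * blinfun_apply d y \<le> u * a + v * a"
    by (intro add_mono mult_left_mono) auto
  then show "u *\<^sub>R c + v *\<^sub>R d \<in> {c. blinfun_apply c y \<le> a}" using \<open>u + v = 1\<close>
    by (simp add: distrib_right[symmetric] blinfun.add_left blinfun.scaleR_left)
qed

lemma hull_sub: "convex C \<Longrightarrow> closedin weak_star C \<Longrightarrow> E \<subseteq> C \<Longrightarrow> wstar_closed_convex_hull E \<subseteq> C"
  unfolding wstar_closed_convex_hull_def by blast

lemma hull_sup: "E \<subseteq> wstar_closed_convex_hull E"
  unfolding wstar_closed_convex_hull_def by blast

lemma hull_convex: "convex (wstar_closed_convex_hull E)"
  unfolding wstar_closed_convex_hull_def by (rule convex_Inter) blast

lemma hull_closed: "closedin weak_star (wstar_closed_convex_hull E)"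
  unfolding wstar_closed_convex_hull_def
proof (rule closedin_Inter)
  show "{C. convex C \<and> closedin weak_star C \<and> E \<subseteq> C} \<noteq> {}"
    using closedin_topspace[of weak_star] by (intro ex_in_conv[THEN iffD1]) (auto intro!: exI[of _ UNIV])
qed blast

lemma hull_empty: "wstar_closed_convex_hull {} = {}"
  using hull_sub[of "{}" "{}"] by auto

lemma rnp_exposed:
  assumes rnp: "dual_RNP TYPE('a::real_normed_vector)"
    and K: "(K :: ('a \<Rightarrow>\<^sub>L real) set) \<noteq> {}" "compactin weak_star K" "convex K"
  shows "\<exists>c0 y. strongly_exposed_by K (\<lambda>c. blinfun_apply c y) c0"
proof (rule ccontr)
  assume "\<not> ?thesis"
  then have "{c0. \<exists>x. strongly_exposed_by K (\<lambda>c. blinfun_apply c x) c0} = {}" by blast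
  moreover have "K = wstar_closed_convex_hull {c0. \<exists>x. strongly_exposed_by K (\<lambda>c. blinfun_apply c x) c0}"
    using rnp K unfolding dual_RNP_def by blast
  ultimately have "K = wstar_closed_convex_hull {}" by simp
  then show False using K(1) hull_empty by blast
qed

lemma slice:
  fixes C :: "('a::real_normed_vector \<Rightarrow>\<^sub>L real) set"
  assumes se: "strongly_exposed_by C (\<lambda>c. blinfun_apply c y) c0"
    and S: "(SUP c\<in>C. ereal (blinfun_apply c y)) = ereal S"
    and e: "e > 0"
  shows "\<exists>\<gamma>>0. \<forall>c\<in>C. blinfun_apply c y > S - \<gamma> \<longrightarrow> dist c c0 < e"
proof (rule ccontr)
  assume "\<not> ?thesis"
  then have "\<forall>n::nat. \<exists>c. c \<in> C \<and> blinfun_apply c y > S - 1/(real n + 1) \<and> dist c c0 \<ge> e"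
    by (metis divide_pos_pos linorder_not_le of_nat_0_le_iff zero_less_one add_pos_nonneg add.commute
        less_add_same_cancel2)
  then obtain sq where sq: "\<And>n. sq n \<in> C" "\<And>n. blinfun_apply (sq n) y > S - 1/(real n + 1)"
    "\<And>n. dist (sq n) c0 \<ge> e"
    by metis
  have le: "blinfun_apply (sq n) y \<le> S" for n
  proof -
    have "ereal (blinfun_apply (sq n) y) \<le> ereal S" unfolding S[symmetric]
      by (rule SUP_upper) (rule sq(1))
    then show ?thesis by simp
  qed
  have eqi: "(\<lambda>n. 1/(real n + 1)) = (\<lambda>n. inverse (real (Suc n)))" by (simp add: inverse_eq_divide add.commute)
  have "(\<lambda>n. S - 1/(real n + 1)) \<longlonglongrightarrow> S - 0"
    by (intro tendsto_diff tendsto_const) (unfold eqi, rule LIMSEQ_inverse_real_of_nat)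
  have "(\<lambda>n. blinfun_apply (sq n) y) \<longlonglongrightarrow> S"
  proof (rule tendsto_sandwich[where f="\<lambda>n. S - 1/(real n + 1)" and h="\<lambda>n. S"])
    show "\<forall>\<^sub>F n in sequentially. S - 1 / (real n + 1) \<le> blinfun_apply (sq n) y"
      using sq(2) by (simp add: less_imp_le)
    show "\<forall>\<^sub>F n in sequentially. blinfun_apply (sq n) y \<le> S" using le by simp
  qed (use \<open>(\<lambda>n. S - 1/(real n + 1)) \<longlonglongrightarrow> S - 0\<close> in simp_all)
  then have "(\<lambda>n. ereal (blinfun_apply (sq n) y)) \<longlonglongrightarrow> (SUP c\<in>C. ereal (blinfun_apply c y))"
    unfolding S by (simp add: lim_ereal)
  then have "sq \<longlonglongrightarrow> c0" using se sq(1) unfolding strongly_exposed_by_def by blast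
  then have "eventually (\<lambda>n. dist (sq n) c0 < e) sequentially" using e by (rule tendstoD)
  then obtain n where "dist (sq n) c0 < e" by (meson eventually_sequentially order.refl)
  then show False using sq(3)[of n] by simp
qed



context region begin

definition Good where
  "Good e x \<longleftrightarrow> (\<exists>\<rho>>0. \<exists>z0. \<forall>x'\<in>ball x \<rho>. \<forall>c\<in>Mx x'. dist c z0 < e)"

lemma R_nonneg: "0 \<le> (M + L)/s"
proof -
  have "z \<in> ball z s" using spos by simp
  then obtain c where "c \<in> Mx z" using attain by blast
  then show ?thesis using normMx \<open>z \<in> ball z s\<close> by (meson norm_ge_zero order_trans)
qed

lemma dense_good:
  assumes rnp: "dual_RNP TYPE('a)"
    and d: "\<delta> > 0" "ball y0 \<delta> \<subseteq> ball z s" and e: "e > 0"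
  shows "\<exists>x\<in>ball y0 \<delta>. Good e x"
proof -
  define R where "R = (M + L)/s"
  have R0: "R \<ge> 0" using R_nonneg R_def by simp
  define A where "A = \<Union>(Mx ` ball y0 \<delta>)"
  define C where "C = wstar_closed_convex_hull A"
  have AB: "A \<subseteq> {c. norm c \<le> R}" unfolding A_def R_def using normMx d by blast
  have "y0 \<in> ball z s" using d centre_in_ball by blast
  then have Ane: "A \<noteq> {}" unfolding A_def using attain d centre_in_ball[of y0 \<delta>] by blast
  have AC: "A \<subseteq> C" unfolding C_def by (rule hull_sup)
  have CB: "C \<subseteq> {c. norm c \<le> R}" unfolding C_def
  proof (rule hull_sub[OF _ ws_closed_ball AB])
    have "{c::'a \<Rightarrow>\<^sub>L real. norm c \<le> R} = cball 0 R" by (auto simp: dist_norm)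
    then show "convex {c::'a \<Rightarrow>\<^sub>L real. norm c \<le> R}" by simp
  qed
  have Ccl: "closedin weak_star C" unfolding C_def by (rule hull_closed)
  have Ccomp: "compactin weak_star C" by (rule closed_compactin[OF alaoglu CB Ccl])
  have Cconv: "convex C" unfolding C_def by (rule hull_convex)
  have Cne: "C \<noteq> {}" using Ane AC by blast
  obtain c0 y where se: "strongly_exposed_by C (\<lambda>c. blinfun_apply c y) c0"
    using rnp_exposed[OF rnp Cne Ccomp Cconv] by blast
  have c0C: "c0 \<in> C" using se unfolding strongly_exposed_by_def by blast
  have bnd: "blinfun_apply c y \<le> R * norm y" if "c \<in> C" for c
  proof -
    have "blinfun_apply c y \<le> norm c * norm y"
      by (metis abs_le_D1 norm_blinfun real_norm_def)
    also have "\<dots> \<le> R * norm y" using CB that by (auto intro: mult_right_mono)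
    finally show ?thesis .
  qed
  define Sv where "Sv = (SUP c\<in>C. ereal (blinfun_apply c y))"
  have "Sv \<ge> ereal (blinfun_apply c0 y)" unfolding Sv_def by (rule SUP_upper[OF c0C])
  moreover have "Sv \<le> ereal (R * norm y)" unfolding Sv_def using bnd by (auto intro: SUP_least)
  ultimately obtain S where S: "Sv = ereal S" by (cases Sv) auto
  obtain \<gamma> where ga: "\<gamma> > 0" "\<And>c. c \<in> C \<Longrightarrow> blinfun_apply c y > S - \<gamma> \<Longrightarrow> dist c c0 < e"
    using slice[OF se S[unfolded Sv_def], of e] e by blast
  obtain c1 where c1A: "c1 \<in> A" and c1y: "blinfun_apply c1 y > S - \<gamma>/2"
  proof (rule ccontr)
    assume "\<not> thesis"
    then have "A \<subseteq> {c. blinfun_apply c y \<le> S - \<gamma>/2}" using that by force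
    then have "C \<subseteq> {c. blinfun_apply c y \<le> S - \<gamma>/2}" unfolding C_def
      by (rule hull_sub[OF convex_eval_le ws_closed_le])
    then have "Sv \<le> ereal (S - \<gamma>/2)" unfolding Sv_def by (auto intro!: SUP_least)
    then show False using S ga by simp
  qed
  obtain x1 where x1: "x1 \<in> ball y0 \<delta>" and c1M: "c1 \<in> Mx x1" using c1A unfolding A_def by blast
  define t where "t = (\<delta> - dist y0 x1) / (2 * (norm y + 1))"
  have ny: "0 \<le> norm y" by simp
  have "2 * (norm y + 1) > 0" using ny by (smt (verit))
  then have tpos: "t > 0" unfolding t_def using x1 by (intro divide_pos_pos) auto
  define x2 where "x2 = x1 + t *\<^sub>R y"
  have "dist y0 x2 \<le> dist y0 x1 + dist x1 x2" by (rule dist_triangle)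
  also have "dist x1 x2 = t * norm y"
  proof -
    have "dist x1 x2 = norm (t *\<^sub>R y)" unfolding x2_def dist_norm by (simp add: norm_minus_commute)
    then show ?thesis using tpos by simp
  qed
  also have "t * norm y < (\<delta> - dist y0 x1)"
  proof -
    have "t * norm y \<le> t * (norm y + 1)" using tpos by simp
    also have "\<dots> = (\<delta> - dist y0 x1)/2" unfolding t_def
      using ny by (simp add: field_simps add_nonneg_eq_0_iff)
    also have "\<dots> < \<delta> - dist y0 x1" using x1 by simp
    finally show ?thesis .
  qed
  finally have x2b: "dist y0 x2 < \<delta>" by simp
  define \<rho> where "\<rho> = min (\<delta> - dist y0 x2) (\<gamma> * t / (4 * (R + 1)))"
  have rpos: "\<rho> > 0" unfolding \<rho>_def using x2b ga tpos R0 by (auto intro!: divide_pos_pos)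
  have "Good e x2" unfolding Good_def
  proof (intro exI[of _ \<rho>] conjI rpos exI[of _ c0] ballI)
    fix x' c assume x': "x' \<in> ball x2 \<rho>" and c: "c \<in> Mx x'"
    have x'b: "x' \<in> ball y0 \<delta>"
    proof -
      have "dist y0 x' \<le> dist y0 x2 + dist x2 x'" by (rule dist_triangle)
      also have "\<dots> < dist y0 x2 + \<rho>" using x' by simp
      also have "\<dots> \<le> \<delta>" unfolding \<rho>_def by simp
      finally show ?thesis by simp
    qed
    have cA: "c \<in> A" unfolding A_def using x'b c by blast
    have cC: "c \<in> C" using cA AC by blast
    have ss: "ball z s \<subseteq> ball z (2 * s)" using spos by (intro subset_ball) simp
    have x1z: "x1 \<in> ball z (2 * s)" and x'z: "x' \<in> ball z (2 * s)" using x1 x'b d ss by blast+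
    have mo: "blinfun_apply c1 (x' - x1) \<le> blinfun_apply c (x' - x1)"
      by (rule mono[OF x1z x'z c1M c])
    define w where "w = x' - x2"
    have xw: "x' - x1 = t *\<^sub>R y + w" unfolding w_def x2_def by simp
    have nw: "norm w < \<rho>" using x' unfolding w_def by (simp add: dist_norm norm_minus_commute)
    have nc1: "norm c1 \<le> R" using c1A AB by blast
    have nc: "norm c \<le> R" using cA AB by blast
    have b1: "\<bar>blinfun_apply c1 w\<bar> \<le> R * \<rho>"
    proof -
      have "\<bar>blinfun_apply c1 w\<bar> \<le> norm c1 * norm w" using norm_blinfun[of c1 w] by simp
      also have "\<dots> \<le> R * \<rho>" using nc1 nw R0 by (intro mult_mono) auto
      finally show ?thesis .
    qed
    have b2: "\<bar>blinfun_apply c w\<bar> \<le> R * \<rho>"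
    proof -
      have "\<bar>blinfun_apply c w\<bar> \<le> norm c * norm w" using norm_blinfun[of c w] by simp
      also have "\<dots> \<le> R * \<rho>" using nc nw R0 by (intro mult_mono) auto
      finally show ?thesis .
    qed
    have "t * blinfun_apply c1 y + blinfun_apply c1 w \<le> t * blinfun_apply c y + blinfun_apply c w"
      using mo unfolding xw by (simp add: blinfun.add_right blinfun.scaleR_right)
    then have k1: "t * (blinfun_apply c1 y - blinfun_apply c y) \<le> 2 * R * \<rho>"
      using b1 b2 by (simp add: algebra_simps)
    have "2 * R * \<rho> \<le> 2 * R * (\<gamma> * t / (4 * (R + 1)))" unfolding \<rho>_def using R0 by (intro mult_left_mono) auto
    also have "\<dots> = (\<gamma> * t / 2) * (R / (R + 1))" using R0 by (simp add: field_simps)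
    also have "\<dots> < (\<gamma> * t / 2) * 1" using R0 ga tpos by (intro mult_strict_left_mono) auto
    finally have k2: "2 * R * \<rho> < (\<gamma> * t / 2) * 1" .
    have "t * (\<gamma> / 2) = (\<gamma> * t / 2) * 1" by simp
    then have "t * (blinfun_apply c1 y - blinfun_apply c y) < t * (\<gamma> / 2)" using k1 k2 by linarith
    then have "blinfun_apply c1 y - blinfun_apply c y < \<gamma> / 2" using tpos by simp
    then have "blinfun_apply c y > S - \<gamma>" using c1y by simp
    then show "dist c c0 < e" using ga(2)[OF cC] by blast
  qed
  moreover have "x2 \<in> ball y0 \<delta>" using x2b by simp
  ultimately show ?thesis by blast
qed

end


context region begin

lemma good_bound:
  assumes x: "x \<in> ball z s" and G: "Good e x"
  shows "\<exists>\<alpha>>0. \<exists>z0. \<forall>c. ereal (blinfun_apply c x) - g c \<ge> ereal (Fr x - \<alpha>) \<longrightarrow> norm (c - z0) \<le> 2 * e"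
proof -
  obtain \<rho> z0 where rho: "\<rho> > 0" and gz: "\<And>x' c. x' \<in> ball x \<rho> \<Longrightarrow> c \<in> Mx x' \<Longrightarrow> dist c z0 < e"
    using G unfolding Good_def by blast
  have e0: "e > 0"
  proof -
    obtain c where "c \<in> Mx x" using attain[OF x] by blast
    then show ?thesis using gz[of x c] rho by (meson centre_in_ball dist_not_less_zero le_less_trans not_le)
  qed
  define r where "r = min \<rho> (s - dist z x) / 2"
  have rpos: "r > 0" unfolding r_def using rho x by auto
  have ss: "ball z s \<subseteq> ball z (2 * s)" using spos by (intro subset_ball) simp
  have x2: "x \<in> ball z (2 * s)" using x ss by blast
  define \<alpha> where "\<alpha> = e * r"
  have apos: "\<alpha> > 0" unfolding \<alpha>_def using e0 rpos by simp
  have "\<forall>c. ereal (blinfun_apply c x) - g c \<ge> ereal (Fr x - \<alpha>) \<longrightarrow> norm (c - z0) \<le> 2 * e"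
  proof (intro allI impI)
    fix c assume "ereal (blinfun_apply c x) - g c \<ge> ereal (Fr x - \<alpha>)"
    then have gc: "g c \<noteq> \<infinity>" and cv: "blinfun_apply c x - real_of_ereal (g c) \<ge> Fr x - \<alpha>"
      by (auto simp: val_ge_iff)
    define G where "G = real_of_ereal (g c)"
    have gG: "g c = ereal G" unfolding G_def using g_fin[OF gc] .
    have key: "blinfun_apply (c - z0) h \<le> 2 * e * norm h" for h
    proof (cases "h = 0")
      case False
      then have nh: "norm h > 0" by simp
      define h' where "h' = (r / norm h) *\<^sub>R h"
      have nh': "norm h' = r" unfolding h'_def using nh rpos by simp
      have "min \<rho> (s - dist z x) \<le> \<rho>" by simp
      then have "r \<le> \<rho>/2" unfolding r_def by (rule divide_right_mono) simp
      then have rr: "r < \<rho>" using rho by linarith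
      have xh: "x + h' \<in> ball x \<rho>" using nh' rr by (simp add: dist_norm)
      have xhz: "x + h' \<in> ball z s"
      proof -
        have "dist z (x + h') \<le> dist z x + dist x (x + h')" by (rule dist_triangle)
        also have "dist x (x + h') = r" using nh' by (simp add: dist_norm)
        also have "dist z x + r < s"
        proof -
          have "r \<le> (s - dist z x)/2" unfolding r_def by (rule divide_right_mono) simp_all
          then show ?thesis using x by simp
        qed
        finally show ?thesis by simp
      qed
      have xh2: "x + h' \<in> ball z (2 * s)" using xhz ss by blast
      obtain c' where c': "c' \<in> Mx (x + h')" using attain[OF xhz] by blast
      have dz: "norm (c' - z0) < e" using gz[OF xh c'] by (simp add: dist_norm)
      have s1: "Fr x \<ge> Fr (x + h') + blinfun_apply c' x - blinfun_apply c' (x + h')"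
        by (rule subgrad[OF xh2 x2 c'])
      have "ereal (blinfun_apply c (x + h')) - g c \<le> ereal (Fr (x + h'))"
        using conj_ge[of c "x + h'"] conj_fin[OF xh2] by simp
      then have s2: "blinfun_apply c (x + h') - G \<le> Fr (x + h')" using gG by simp
      have "blinfun_apply c h' \<le> blinfun_apply c' h' + \<alpha>"
        using s1 s2 cv unfolding G_def by (simp add: blinfun.add_right)
      moreover have "blinfun_apply (c' - z0) h' \<le> e * r"
      proof -
        have "blinfun_apply (c' - z0) h' \<le> norm (c' - z0) * norm h'"
          by (metis abs_le_D1 norm_blinfun real_norm_def)
        also have "\<dots> \<le> e * r" using dz nh' rpos by (simp add: mult_right_mono less_imp_le)
        finally show ?thesis .
      qed
      ultimately have "blinfun_apply (c - z0) h' \<le> 2 * e * r" unfolding \<alpha>_def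
        by (simp add: blinfun.diff_left)
      then have "(r / norm h) * blinfun_apply (c - z0) h \<le> (r / norm h) * (2 * e * norm h)"
      proof -
        have "(r / norm h) * (2 * e * norm h) = 2 * e * r" using nh by simp
        moreover have "blinfun_apply (c - z0) h' = (r / norm h) * blinfun_apply (c - z0) h"
          unfolding h'_def by (simp add: blinfun.scaleR_right)
        ultimately show ?thesis using \<open>blinfun_apply (c - z0) h' \<le> 2 * e * r\<close> by simp
      qed
        moreover have "r / norm h > 0" using rpos nh by simp
      ultimately show ?thesis by (simp only: mult_le_cancel_left_pos)
    qed simp
    show "norm (c - z0) \<le> 2 * e"
    proof (rule norm_blinfun_bound)
      show "0 \<le> 2 * e" using e0 by simp
      fix h
      have "blinfun_apply (c - z0) h \<le> 2 * e * norm h" by (rule key)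
      moreover have "- blinfun_apply (c - z0) h \<le> 2 * e * norm h" using key[of "-h"]
        by (simp add: blinfun.minus_right)
      ultimately show "norm (blinfun_apply (c - z0) h) \<le> 2 * e * norm h" by simp
    qed
  qed
  then show ?thesis using apos by blast
qed

lemma exposed:
  assumes x: "x \<in> ball z s" and G: "\<And>n. Good (1/(real n + 1)) x"
  shows "x \<in> wstar_Exp g"
proof -
  have ss: "ball z s \<subseteq> ball z (2 * s)" using spos by (intro subset_ball) simp
  have x2: "x \<in> ball z (2 * s)" using x ss by blast
  obtain cs where cs: "cs \<in> Mx x" using attain[OF x] by blast
  have ev: "ereal (blinfun_apply cs x) - g cs = ereal (Fr x)" using cs conj_fin[OF x2] unfolding Mx_def by simp
  then have gcs: "g cs \<noteq> \<infinity>" by auto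
  define Gs where "Gs = real_of_ereal (g cs)"
  have gGs: "g cs = ereal Gs" unfolding Gs_def using g_fin[OF gcs] .
  have csv: "blinfun_apply cs x - Gs = Fr x" using ev gGs by simp
  have bound: "\<exists>\<alpha>>0. \<forall>c. ereal (blinfun_apply c x) - g c \<ge> ereal (Fr x - \<alpha>) \<longrightarrow> dist c cs \<le> 4/(real n + 1)" for n
  proof -
    obtain \<alpha> z0 where a: "\<alpha> > 0" and b: "\<And>c. ereal (blinfun_apply c x) - g c \<ge> ereal (Fr x - \<alpha>) \<Longrightarrow> norm (c - z0) \<le> 2 * (1/(real n + 1))"
      using good_bound[OF x G[of n]] by blast
    have "norm (cs - z0) \<le> 2 * (1/(real n + 1))" using b[of cs] ev a by simp
    then have "dist c cs \<le> 4/(real n + 1)" if "ereal (blinfun_apply c x) - g c \<ge> ereal (Fr x - \<alpha>)" for c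
      using b[OF that] norm_triangle_ineq4[of "c - z0" "cs - z0"] by (simp add: dist_norm)
    then show ?thesis using a by blast
  qed
  define phi where "phi = (\<lambda>(c::'a \<Rightarrow>\<^sub>L real, r::real). blinfun_apply c x - r)"
  have epi_le: "ereal (phi p) \<le> ereal (Fr x)" if "p \<in> epi g" for p
  proof -
    obtain c r where p: "p = (c, r)" by fastforce
    then have "g c \<le> ereal r" using that unfolding epi_def by simp
    then have "g c \<noteq> \<infinity>" by auto
    then obtain G where gG: "g c = ereal G" using g_gt[of c] by (cases "g c") auto
    have "ereal (blinfun_apply c x) - g c \<le> ereal (Fr x)" using conj_ge[of c x] conj_fin[OF x2] by simp
    then show ?thesis using gG \<open>g c \<le> ereal r\<close> unfolding p phi_def by simp
  qed
  have inepi: "(cs, Gs) \<in> epi g" unfolding epi_def using gGs by simp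
  have SUPeq: "(SUP p\<in>epi g. ereal (phi p)) = ereal (Fr x)"
  proof (rule antisym)
    show "(SUP p\<in>epi g. ereal (phi p)) \<le> ereal (Fr x)" using epi_le by (auto intro: SUP_least)
    have "ereal (phi (cs, Gs)) \<le> (SUP p\<in>epi g. ereal (phi p))" by (rule SUP_upper[OF inepi])
    then show "ereal (Fr x) \<le> (SUP p\<in>epi g. ereal (phi p))" using csv unfolding phi_def by simp
  qed
  have "strongly_exposed_by (epi g) phi (cs, real_of_ereal (g cs))"
    unfolding strongly_exposed_by_def
  proof (intro conjI allI impI)
    show "(cs, real_of_ereal (g cs)) \<in> epi g" using inepi Gs_def by simp
    fix p :: "nat \<Rightarrow> ('a \<Rightarrow>\<^sub>L real) \<times> real"
    assume pe: "\<forall>n. p n \<in> epi g" and lim: "(\<lambda>n. ereal (phi (p n))) \<longlonglongrightarrow> (SUP p\<in>epi g. ereal (phi p))"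
    from lim have lr: "(\<lambda>n. phi (p n)) \<longlonglongrightarrow> Fr x" unfolding SUPeq by (simp add: lim_ereal)
    define cn where "cn n = fst (p n)" for n
    define rn where "rn n = snd (p n)" for n
    have pn: "p n = (cn n, rn n)" for n unfolding cn_def rn_def by simp
    have phin: "phi (p n) = blinfun_apply (cn n) x - rn n" for n unfolding pn phi_def by simp
    have gle: "g (cn n) \<le> ereal (rn n)" for n using pe unfolding epi_def pn by auto
    have cl: "cn \<longlonglongrightarrow> cs"
    proof (rule metric_LIMSEQ_I)
      fix e :: real assume e: "e > 0"
      obtain n :: nat where n: "4/(real n + 1) < e"
      proof -
        obtain n :: nat where "1/(real n + 1) < e/4" using e
          by (metis divide_pos_pos nat_approx_posE of_nat_Suc add.commute zero_less_numeral)
        then show ?thesis using that[of n] by (simp add: field_simps)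
      qed
      obtain \<alpha> where a: "\<alpha> > 0" and b: "\<And>c. ereal (blinfun_apply c x) - g c \<ge> ereal (Fr x - \<alpha>) \<Longrightarrow> dist c cs \<le> 4/(real n + 1)"
        using bound[of n] by blast
      from lr a obtain N where N: "\<And>m. m \<ge> N \<Longrightarrow> dist (phi (p m)) (Fr x) < \<alpha>"
        using metric_LIMSEQ_D by blast
      show "\<exists>N. \<forall>m\<ge>N. dist (cn m) cs < e"
      proof (intro exI allI impI)
        fix m assume "m \<ge> N"
        then have "phi (p m) > Fr x - \<alpha>" using N[of m] by (simp add: dist_real_def abs_less_iff)
        then have "ereal (blinfun_apply (cn m) x - rn m) \<ge> ereal (Fr x - \<alpha>)" using phin by simp
        moreover have "ereal (blinfun_apply (cn m) x) - g (cn m) \<ge> ereal (blinfun_apply (cn m) x - rn m)"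
          using gle[of m] g_gt[of "cn m"] by (cases "g (cn m)") auto
        ultimately have "dist (cn m) cs \<le> 4/(real n + 1)" using b by (meson order_trans)
        then show "dist (cn m) cs < e" using n by simp
      qed
    qed
    have "(\<lambda>n. blinfun_apply (cn n) x) \<longlonglongrightarrow> blinfun_apply cs x"
      using cl by (intro blinfun.tendsto tendsto_const)
    then have "(\<lambda>n. blinfun_apply (cn n) x - phi (p n)) \<longlonglongrightarrow> blinfun_apply cs x - Fr x"
      using lr by (intro tendsto_diff)
    then have "rn \<longlonglongrightarrow> Gs" using csv phin by (simp add: algebra_simps)
    then have "(\<lambda>n. (cn n, rn n)) \<longlonglongrightarrow> (cs, Gs)" using cl by (intro tendsto_Pair)
    moreover have "p = (\<lambda>n. (cn n, rn n))" by (rule ext) (rule pn)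
    ultimately show "p \<longlonglongrightarrow> (cs, real_of_ereal (g cs))" using Gs_def by simp
  qed
  then show ?thesis unfolding wstar_Exp_def phi_def edom_def using gcs by auto
qed

lemma good_open: "open {x. Good e x}"
proof (subst open_dist, intro ballI)
  fix x assume "x \<in> {x. Good e x}"
  then obtain \<rho> z0 where rho: "\<rho> > 0" and gz: "\<And>x' c. x' \<in> ball x \<rho> \<Longrightarrow> c \<in> Mx x' \<Longrightarrow> dist c z0 < e"
    unfolding Good_def by blast
  have "Good e y" if "dist y x < \<rho>/2" for y
    unfolding Good_def
  proof (intro exI[of _ "\<rho>/2"] conjI exI[of _ z0] ballI)
    show "\<rho>/2 > 0" using rho by simp
    fix x' c assume "x' \<in> ball y (\<rho>/2)" "c \<in> Mx x'"
    moreover have "x' \<in> ball x \<rho>"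
      using \<open>x' \<in> ball y (\<rho>/2)\<close> that dist_triangle[of x x' y]
      by (simp add: dist_commute)
    ultimately show "dist c z0 < e" using gz by blast
  qed
  then show "\<exists>d>0. \<forall>y. dist y x < d \<longrightarrow> y \<in> {x. Good e x}" using rho
    by (intro exI[of _ "\<rho>/2"]) auto
qed

lemma baire_good:
  assumes rnp: "dual_RNP TYPE('a)"
  shows "\<exists>x\<in>ball z s. \<forall>n. Good (1/(real n + 1)) x"
proof -
  define X where "X = top_of_set (ball z s)"
  define Gn where "Gn n = ball z s \<inter> {x. Good (1/(real n + 1)) x}" for n :: nat
  have cm: "completely_metrizable_space X" unfolding X_def
    by (intro completely_metrizable_space_openin completely_metrizable_space_euclidean) simp
  have "X closure_of \<Inter>(range Gn) = topspace X"
  proof (rule Baire_category)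
    show "completely_metrizable_space X \<or> locally_compact_space X \<and> regular_space X" using cm by simp
    show "countable (range Gn)" by simp
    fix T assume "T \<in> range Gn"
    then obtain n where T: "T = Gn n" by blast
    show "openin X T \<and> X closure_of T = topspace X"
    proof
      show "openin X T" unfolding T X_def Gn_def
        using good_open by (auto intro!: openin_open_Int simp: Int_commute)
      show "X closure_of T = topspace X"
      proof (rule antisym)
        show "X closure_of T \<subseteq> topspace X" by (rule closure_of_subset_topspace)
        show "topspace X \<subseteq> X closure_of T"
        proof
          fix x assume xt: "x \<in> topspace X"
          then have xb: "x \<in> ball z s" unfolding X_def by simp
          show "x \<in> X closure_of T" unfolding in_closure_of
          proof (intro conjI allI impI xt)
            fix U assume U: "x \<in> U \<and> openin X U"
            then obtain V where V: "open V" "U = V \<inter> ball z s"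
              unfolding X_def openin_subtopology by (auto simp: openin_open)
            then obtain \<eta> where eta: "\<eta> > 0" "ball x \<eta> \<subseteq> V" using U open_contains_ball by blast
            define \<delta> where "\<delta> = min \<eta> (s - dist z x)"
            have dpos: "\<delta> > 0" unfolding \<delta>_def using eta xb by simp
            have bsub: "ball x \<delta> \<subseteq> ball z s"
            proof
              fix y assume "y \<in> ball x \<delta>"
              then show "y \<in> ball z s" using dist_triangle[of z y x] unfolding \<delta>_def by simp
            qed
            have "1/(real n + 1) > 0" by simp
            then obtain y where y: "y \<in> ball x \<delta>" "Good (1/(real n + 1)) y"
              using dense_good[OF rnp dpos bsub] by blast
            have "y \<in> V" using y eta unfolding \<delta>_def by auto
            then show "\<exists>y. y \<in> T \<and> y \<in> U" using y bsub V unfolding T Gn_def by blast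
          qed
        qed
      qed
    qed
  qed
  moreover have "topspace X \<noteq> {}" unfolding X_def using spos by simp
  ultimately have "\<Inter>(range Gn) \<noteq> {}" by (metis closure_of_empty)
  then obtain x where "\<And>n. x \<in> Gn n" by blast
  then show ?thesis unfolding Gn_def by blast
qed

end


theorem mainTheorem6:
  fixes g :: "('a::banach \<Rightarrow>\<^sub>L real) \<Rightarrow> ereal"
  assumes "dual_RNP TYPE('a)"
    and "proper_fun g" and "convex_efun g" and "wstar_lsc g"
    and "interior (edom (conj_X g)) \<noteq> {}"
  shows "interior (edom (conj_X g)) \<subseteq> closure (wstar_Exp g)"
proof
  note rnp = assms(1)
  have gf: "gfun g" using assms(2,4) by (simp add: gfun_def)
  fix x0 assume x0: "x0 \<in> interior (edom (conj_X g))"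
  show "x0 \<in> closure (wstar_Exp g)" unfolding closure_approachable
  proof (intro allI impI)
    fix e :: real assume e: "e > 0"
    obtain e1 where e1: "e1 > 0" "ball x0 e1 \<subseteq> edom (conj_X g)"
      using x0 mem_interior by blast
    define B where "B = ball x0 (min e e1)"
    have Bsub: "B \<subseteq> edom (conj_X g)" "B \<subseteq> ball x0 e" unfolding B_def using e1 by auto
    define X where "X = top_of_set B"
    define F where "F k = B \<inter> {x. conj_X g x \<le> ereal (real k)}" for k :: nat
    have "\<exists>k. X interior_of F k \<noteq> {}"
    proof (rule ccontr)
      assume "\<not> ?thesis"
      then have emp: "\<And>k. X interior_of F k = {}" by blast
      have "X interior_of \<Union>(range F) = {}"
      proof (rule Baire_category_alt)
        show "completely_metrizable_space X \<or> locally_compact_space X \<and> regular_space X"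
          unfolding X_def B_def
          by (intro disjI1 completely_metrizable_space_openin completely_metrizable_space_euclidean) simp
        show "countable (range F)" by simp
        fix T assume "T \<in> range F"
        then obtain k where T: "T = F k" by blast
        show "closedin X T \<and> X interior_of T = {}"
          unfolding T using emp X_def F_def
          by (auto intro!: closedin_closed_Int gfun.closed_conj_le[OF gf])
      qed
      moreover have "\<Union>(range F) = B"
      proof
        show "\<Union>(range F) \<subseteq> B" unfolding F_def by auto
        show "B \<subseteq> \<Union>(range F)"
        proof
          fix x assume xB: "x \<in> B"
          then have "conj_X g x < \<infinity>" using Bsub unfolding edom_def by auto
          moreover have "conj_X g x > -\<infinity>" by (rule gfun.conj_gt[OF gf])
          ultimately obtain v where v: "conj_X g x = ereal v" by (cases "conj_X g x") auto
          obtain k :: nat where "v \<le> real k" using real_arch_simple by blast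
          then show "x \<in> \<Union>(range F)" unfolding F_def using xB v by auto
        qed
      qed
      moreover have "B \<noteq> {}" unfolding B_def using e e1 by simp
      ultimately show False unfolding X_def using interior_of_topspace[of "top_of_set B"] by simp
    qed
    then obtain k p where "p \<in> X interior_of F k" by blast
    then obtain T where T: "openin X T" "p \<in> T" "T \<subseteq> F k" unfolding interior_of_def by blast
    have "open T" using T(1) unfolding X_def B_def by (rule openin_open_trans) simp
    then obtain \<eta> where eta: "\<eta> > 0" "ball p \<eta> \<subseteq> T" using T(2) open_contains_ball by blast
    define s where "s = \<eta>/2"
    have spos: "s > 0" unfolding s_def using eta by simp
    have bF: "ball p (2 * s) \<subseteq> F k" unfolding s_def using eta T by auto
    obtain q where q: "g q < \<infinity>" using assms(2) unfolding proper_fun_def edom_def by blast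
    then obtain G where gq: "g q = ereal G" using gfun.g_gt[OF gf, of q] by (cases "g q") auto
    define L where "L = norm q * (norm p + 2 * s) + G"
    have reg: "region g p s (real k) L"
      unfolding region_def region_axioms_def
    proof (intro conjI gf spos allI impI)
      fix x assume x: "x \<in> ball p (2 * s)"
      then show "conj_X g x \<le> ereal (real k)" using bF unfolding F_def by auto
      have "norm x \<le> norm p + 2 * s"
        using x norm_triangle_ineq2[of x p] by (simp add: dist_norm norm_minus_commute)
      then have "norm q * norm x \<le> norm q * (norm p + 2 * s)" by (simp add: mult_left_mono)
      moreover have "- blinfun_apply q x \<le> norm q * norm x"
        by (metis abs_le_D2 norm_blinfun real_norm_def)
      ultimately have "ereal (-L) \<le> ereal (blinfun_apply q x) - g q" unfolding L_def gq by simp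
      also have "\<dots> \<le> conj_X g x" by (rule gfun.conj_ge[OF gf])
      finally show "ereal (-L) \<le> conj_X g x" .
    qed
    obtain x where x: "x \<in> ball p s" "x \<in> wstar_Exp g"
      using region.baire_good[OF reg rnp] region.exposed[OF reg] by blast
    have "ball p s \<subseteq> ball p (2 * s)" using spos by (intro subset_ball) simp
    then have "x \<in> ball x0 e" using x(1) bF Bsub unfolding F_def by blast
    then show "\<exists>y\<in>wstar_Exp g. dist y x0 < e" using x(2) by (auto simp: dist_commute)
  qed
qed


end
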